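(* Let $L\in R[x][\partial]$ have order $r>0$. The set $I\subseteq R$ consisting of $0$ together with all contents of leading coefficients $\mathrm{lc}_\partial(T)$ of desingularized operators $T$ for $L$ is an ideal of $R$.
   Context: $R$ is a principal ideal domain with quotient field $Q_R$; $\sigma$ is an $R$-automorphism of $R[x]$ with $\sigma(x)=\gamma x+\tau$ ($\gamma$ a unit), $\delta$ an $R$-linear $\sigma$-derivation with $\deg\delta(x)\le1$; $R[x][\partial]$ is the Ore algebra with $\partial p=\sigma(p)\partial+\delta(p)$, inside $Q_R(x)[\partial]$. Each nonzero $f\in R[x]$ equals $cg$ with $c\in R$ (a content, unique up to units) and $g$ primitive. $\mathrm{cont}(L)=Q_R(x)[\partial]L\cap R[x][\partial]$. For $p\in R[x]$ dividing $\mathrm{lc}_\partial(L)$: $p$ is removable from $L$ at order $k$ if there are $P\in Q_R(x)[\partial]$ of order $k$ and $w,v\in R[x]$ with $\gcd(p,w)=1$ such that $PL\in R[x][\partial]$ and $\sigma^{-k}(\mathrm{lc}_\partial(PL))=\frac{w}{vp}\mathrm{lc}_\partial(L)$; non-removable if removable at no order. If $\mathrm{lc}_\partial(L)=c\,p_1^{e_1}\cdots p_m^{e_m}$ ($c\in R$, $p_i\in R[x]\setminus R$ irreducible and pairwise coprime), $T\in R[x][\partial]$ of order $k$ is desingularized for $L$ if $T\in\mathrm{cont}(L)$ and $\sigma^{r-k}(\mathrm{lc}_\partial(T))=\frac{a}{b\,p_1^{k_1}\cdots p_m^{k_m}}\mathrm{lc}_\partial(L)$ with $a,b\in R$, $b\ne0$,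 and $p_i^{d_i}$ non-removable from $L$ for all integers $d_i>k_i$. *)

theory Defs
  imports "HOL-Computational_Algebra.Polynomial" "HOL-Computational_Algebra.Fraction_Field"
begin

text \<open>R is a type 'a :: idom (assumed PID in the theorem); R[x] = 'a poly;
 Q_R(x) = ('a poly) fract; operators in R[x][d] are 'a poly poly (coefficient i =
 coefficient of d^i); operators in Q_R(x)[d] are 'a poly fract poly.\<close>

definition is_ideal :: "'a::comm_ring_1 set \<Rightarrow> bool" where
  "is_ideal I \<longleftrightarrow> 0 \<in> I \<and> (\<forall>a\<in>I. \<forall>b\<in>I. a + b \<in> I) \<and> (\<forall>a\<in>I. \<forall>r. r * a \<in> I)"

definition is_PID_type :: "'a::idom itself \<Rightarrow> bool" where
  "is_PID_type _ \<longleftrightarrow> (\<forall>I::'a set. is_ideal I \<longrightarrow> (\<exists>g. I = {r * g | r. True}))"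

definition primitive :: "'a::idom poly \<Rightarrow> bool" where
  "primitive g \<longleftrightarrow> g \<noteq> 0 \<and> (\<forall>d. (\<forall>i. d dvd coeff g i) \<longrightarrow> d dvd 1)"

definition fmap :: "('a::idom poly \<Rightarrow> 'a poly) \<Rightarrow> 'a poly fract \<Rightarrow> 'a poly fract" where
  "fmap g f = (case (SOME (a, b). b \<noteq> 0 \<and> f = Fract a b) of (a, b) \<Rightarrow> Fract (g a) (g b))"

definition fder :: "('a::idom poly \<Rightarrow> 'a poly) \<Rightarrow> ('a poly \<Rightarrow> 'a poly) \<Rightarrow> 'a poly fract \<Rightarrow> 'a poly fract" where
  "fder \<sigma> \<delta> f = (case (SOME (a, b). b \<noteq> 0 \<and> f = Fract a b) of (a, b) \<Rightarrow>
      Fract (\<delta> a) b - Fract (\<sigma> a * \<delta> b) (\<sigma> b * b))"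

text \<open>left multiplication by d: d (sum c_j d^j) = sum (sigma(c_j) d^(j+1) + delta(c_j) d^j)\<close>
definition dmul :: "('a::idom poly \<Rightarrow> 'a poly) \<Rightarrow> ('a poly \<Rightarrow> 'a poly) \<Rightarrow> 'a poly fract poly \<Rightarrow> 'a poly fract poly" where
  "dmul \<sigma> \<delta> P = pCons 0 (map_poly (fmap \<sigma>) P) + map_poly (fder \<sigma> \<delta>) P"

definition ore_mult :: "('a::idom poly \<Rightarrow> 'a poly) \<Rightarrow> ('a poly \<Rightarrow> 'a poly) \<Rightarrow> 'a poly fract poly \<Rightarrow> 'a poly fract poly \<Rightarrow> 'a poly fract poly" where
  "ore_mult \<sigma> \<delta> A B = (\<Sum>i\<le>degree A. smult (coeff A i) ((dmul \<sigma> \<delta> ^^ i) B))"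

definition emb :: "'a::idom poly poly \<Rightarrow> 'a poly fract poly" where
  "emb L = map_poly (\<lambda>p. Fract p 1) L"

definition spow :: "('a::idom poly \<Rightarrow> 'a poly) \<Rightarrow> int \<Rightarrow> 'a poly \<Rightarrow> 'a poly" where
  "spow \<sigma> n = (if n \<ge> 0 then \<sigma> ^^ nat n else inv \<sigma> ^^ nat (- n))"

definition in_cont :: "('a::idom poly \<Rightarrow> 'a poly) \<Rightarrow> ('a poly \<Rightarrow> 'a poly) \<Rightarrow> 'a poly poly \<Rightarrow> 'a poly poly \<Rightarrow> bool" where
  "in_cont \<sigma> \<delta> L T \<longleftrightarrow> (\<exists>P. ore_mult \<sigma> \<delta> P (emb L) = emb T)"

text \<open>gcd(p,w) = 1 in R[x]: every common divisor is a unit (library notion coprime unfolded;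
  the library constant needs a division operation on the coefficient type)\<close>
definition rel_prime :: "'a::idom poly \<Rightarrow> 'a poly \<Rightarrow> bool" where
  "rel_prime p w \<longleftrightarrow> (\<forall>d. d dvd p \<longrightarrow> d dvd w \<longrightarrow> d dvd 1)"

definition removable_at :: "('a::idom poly \<Rightarrow> 'a poly) \<Rightarrow> ('a poly \<Rightarrow> 'a poly) \<Rightarrow> 'a poly \<Rightarrow> 'a poly poly \<Rightarrow> nat \<Rightarrow> bool" where
  "removable_at \<sigma> \<delta> p L k \<longleftrightarrow> p dvd lead_coeff L \<and>
     (\<exists>P Q w v. P \<noteq> 0 \<and> degree P = k \<and> ore_mult \<sigma> \<delta> P (emb L) = emb Q \<and>
        rel_prime p w \<and> v \<noteq> 0 \<and>
        Fract (spow \<sigma> (- int k) (lead_coeff Q)) 1 = Fract w (v * p) * Fract (lead_coeff L) 1)"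

definition non_removable :: "('a::idom poly \<Rightarrow> 'a poly) \<Rightarrow> ('a poly \<Rightarrow> 'a poly) \<Rightarrow> 'a poly \<Rightarrow> 'a poly poly \<Rightarrow> bool" where
  "non_removable \<sigma> \<delta> p L \<longleftrightarrow> (\<forall>k. \<not> removable_at \<sigma> \<delta> p L k)"

text \<open>desingularized operator for L, relative to the irreducible factors ps = [p_1,...,p_m]
  of lc(L)\<close>
definition desingularized :: "('a::idom poly \<Rightarrow> 'a poly) \<Rightarrow> ('a poly \<Rightarrow> 'a poly) \<Rightarrow> 'a poly list \<Rightarrow> 'a poly poly \<Rightarrow> 'a poly poly \<Rightarrow> bool" where
  "desingularized \<sigma> \<delta> ps L T \<longleftrightarrow> T \<noteq> 0 \<and> in_cont \<sigma> \<delta> L T \<and>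
     (\<exists>a b ks. b \<noteq> 0 \<and> length ks = length ps \<and>
        Fract (spow \<sigma> (int (degree L) - int (degree T)) (lead_coeff T)) 1
          = Fract [:a:] ([:b:] * (\<Prod>i<length ps. (ps ! i) ^ (ks ! i))) * Fract (lead_coeff L) 1 \<and>
        (\<forall>i<length ps. \<forall>d. d > ks ! i \<longrightarrow> non_removable \<sigma> \<delta> ((ps ! i) ^ d) L))"

definition desing_content_set :: "('a::idom poly \<Rightarrow> 'a poly) \<Rightarrow> ('a poly \<Rightarrow> 'a poly) \<Rightarrow> 'a poly list \<Rightarrow> 'a poly poly \<Rightarrow> 'a set" where
  "desing_content_set \<sigma> \<delta> ps L = {0} \<union>
     {c. \<exists>T g. desingularized \<sigma> \<delta> ps L T \<and> primitive g \<and> lead_coeff T = smult c g}"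

end

theory Submission
  imports Defs
begin

definition cideal :: "'a::idom poly \<Rightarrow> 'a set" where
  "cideal f = {r. \<exists>c. r = (\<Sum>i\<le>degree f. c i * coeff f i)}"

lemma cideal_ideal: "is_ideal (cideal f)"
  unfolding is_ideal_def cideal_def
proof (intro conjI ballI allI)
  show "0 \<in> {r. \<exists>c. r = (\<Sum>i\<le>degree f. c i * coeff f i)}"
    by (rule CollectI, rule exI[of _ "\<lambda>_. 0"]) simp
next
  fix a b assume "a \<in> {r. \<exists>c. r = (\<Sum>i\<le>degree f. c i * coeff f i)}"
    "b \<in> {r. \<exists>c. r = (\<Sum>i\<le>degree f. c i * coeff f i)}"
  then obtain c c' where "a = (\<Sum>i\<le>degree f. c i * coeff f i)" "b = (\<Sum>i\<le>degree f. c' i * coeff f i)" by auto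
  then have "a + b = (\<Sum>i\<le>degree f. (c i + c' i) * coeff f i)"
    by (simp add: sum.distrib distrib_right)
  then show "a + b \<in> {r. \<exists>c. r = (\<Sum>i\<le>degree f. c i * coeff f i)}"
    unfolding mem_Collect_eq by (rule exI[of _ "\<lambda>i. c i + c' i"])
next
  fix a r assume "a \<in> {r. \<exists>c. r = (\<Sum>i\<le>degree f. c i * coeff f i)}"
  then obtain c where "a = (\<Sum>i\<le>degree f. c i * coeff f i)" by auto
  then have "r * a = (\<Sum>i\<le>degree f. (r * c i) * coeff f i)"
    by (simp add: sum_distrib_left mult.assoc)
  then show "r * a \<in> {r. \<exists>c. r = (\<Sum>i\<le>degree f. c i * coeff f i)}"
    unfolding mem_Collect_eq by (rule exI[of _ "\<lambda>i. r * c i"])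
qed

lemma coeff_in_cideal: "coeff f j \<in> cideal f"
proof (cases "j \<le> degree f")
  case True
  have "(\<Sum>i\<le>degree f. (if i = j then 1 else 0) * coeff f i) = (\<Sum>i\<le>degree f. (if i = j then coeff f i else 0))"
    by (rule sum.cong) auto
  also have "\<dots> = coeff f j" using True by simp
  finally have "(\<Sum>i\<le>degree f. (if i = j then 1 else 0) * coeff f i) = coeff f j" .
  then show ?thesis unfolding cideal_def mem_Collect_eq
    by (intro exI[of _ "\<lambda>i. if i = j then 1 else 0"]) simp
next
  case False
  then have "coeff f j = 0" by (simp add: coeff_eq_0)
  then show ?thesis using cideal_ideal[of f] unfolding is_ideal_def by simp
qed

lemma dvd_cideal: "(\<And>i. e dvd coeff f i) \<Longrightarrow> r \<in> cideal f \<Longrightarrow> e dvd r"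
  unfolding cideal_def by (auto intro!: dvd_sum dvd_mult)

lemma smult_exists:
  fixes h :: "'a::idom poly"
  assumes "\<And>i. d dvd coeff h i"
  shows "\<exists>h'. h = smult d h'"
proof -
  have "\<forall>i. \<exists>y. coeff h i = d * y" using assms by (auto simp: dvd_def)
  then obtain f where f: "\<And>i. coeff h i = d * f i" by metis
  define h' where "h' = Poly (map f [0..<Suc (degree h)])"
  have "coeff h' i = (if i \<le> degree h then f i else 0)" for i
    unfolding h'_def by (auto simp: nth_default_def nth_append)
  then have "coeff h i = coeff (smult d h') i" for i
    by (cases "i \<le> degree h") (simp add: f, simp add: coeff_eq_0)
  then have "h = smult d h'" by (simp add: poly_eq_iff)
  then show ?thesis by blast
qed

lemma content_decomp:
  fixes f :: "'a::idom poly"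
  assumes PID: "is_PID_type TYPE('a)" and f: "f \<noteq> 0"
  shows "\<exists>\<gamma> f0. f = smult \<gamma> f0 \<and> primitive f0"
proof -
  obtain g where g: "cideal f = {r * g | r. True}"
    using PID cideal_ideal[of f] unfolding is_PID_type_def by blast
  have cg: "g dvd coeff f i" for i
    using coeff_in_cideal[of f i] g by auto
  obtain f0 where f0: "f = smult g f0" using smult_exists[of g f, OF cg] by blast
  have gnz: "g \<noteq> 0" using f f0 by auto
  have "g \<in> cideal f" using g by auto
  have "primitive f0" unfolding primitive_def
  proof (intro conjI allI impI)
    show "f0 \<noteq> 0" using f f0 by auto
    fix d assume d: "\<forall>i. d dvd coeff f0 i"
    have "d * g dvd coeff f i" for i using d f0 by (simp add: mult.commute mult_dvd_mono)
    then have "d * g dvd g" using dvd_cideal \<open>g \<in> cideal f\<close> by blast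
    then have "d * g dvd 1 * g" by simp
    then show "d dvd 1" using gnz by (subst (asm) dvd_mult_cancel_right) simp
  qed
  then show ?thesis using f0 by blast
qed

lemma prim_one_in: 
  fixes h :: "'a::idom poly"
  assumes PID: "is_PID_type TYPE('a)" and h: "primitive h"
  shows "1 \<in> cideal h"
proof -
  obtain g where g: "cideal h = {r * g | r. True}"
    using PID cideal_ideal[of h] unfolding is_PID_type_def by blast
  have "g dvd coeff h i" for i
    using coeff_in_cideal[of h i] g by auto
  then have "g dvd 1" using h unfolding primitive_def by blast
  then obtain w where "1 = g * w" by (auto simp: dvd_def)
  then show ?thesis using g by (auto simp: mult.commute)
qed

lemma prim_dvd_cancel:
  fixes h :: "'a::idom poly"
  assumes PID: "is_PID_type TYPE('a)" and h: "primitive h"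
    and d: "\<And>i. a dvd b * coeff h i"
  shows "a dvd b"
proof -
  obtain c where c: "1 = (\<Sum>i\<le>degree h. c i * coeff h i)"
    using prim_one_in[OF PID h] unfolding cideal_def by auto
  have "b = (\<Sum>i\<le>degree h. c i * (b * coeff h i))"
    by (subst mult_1_right[symmetric, of b], subst c) (simp add: sum_distrib_left ac_simps)
  also have "a dvd \<dots>" by (intro dvd_sum dvd_mult d)
  finally show ?thesis .
qed

lemma two_gen_ideal: "is_ideal {s * q + t * x |s t. True}"
  unfolding is_ideal_def
proof (intro conjI ballI allI)
  show "0 \<in> {s * q + t * x |s t. True}" by (rule CollectI, rule exI[of _ 0], rule exI[of _ 0]) simp
next
  fix a b assume "a \<in> {s * q + t * x |s t. True}" "b \<in> {s * q + t * x |s t. True}"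
  then obtain s t s' t' where "a = s * q + t * x" "b = s' * q + t' * x" by auto
  then have e: "a + b = (s + s') * q + (t + t') * x" by (simp add: algebra_simps)
  show "a + b \<in> {s * q + t * x |s t. True}" by (rule CollectI, rule exI[of _ "s + s'"], rule exI[of _ "t + t'"]) (simp add: e)
next
  fix a r assume "a \<in> {s * q + t * x |s t. True}"
  then obtain s t where "a = s * q + t * x" by auto
  then have e: "r * a = (r * s) * q + (r * t) * x" by (simp add: algebra_simps)
  show "r * a \<in> {s * q + t * x |s t. True}" by (rule CollectI, rule exI[of _ "r * s"], rule exI[of _ "r * t"]) (simp add: e)
qed

lemma principal_ideal: "is_ideal {r * q |r. True}"
  unfolding is_ideal_def
proof (intro conjI ballI allI)
  show "0 \<in> {r * q |r. True}" by (rule CollectI, rule exI[of _ 0]) simp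
next
  fix a b assume "a \<in> {r * q |r. True}" "b \<in> {r * q |r. True}"
  then obtain s t where "a = s * q" "b = t * q" by auto
  then have e: "a + b = (s + t) * q" by (simp add: algebra_simps)
  show "a + b \<in> {r * q |r. True}" by (rule CollectI, rule exI[of _ "s + t"]) (simp add: e)
next
  fix a r assume "a \<in> {r * q |r. True}"
  then obtain s where "a = s * q" by auto
  then have e: "r * a = (r * s) * q" by (simp add: algebra_simps)
  show "r * a \<in> {r * q |r. True}" by (rule CollectI, rule exI[of _ "r * s"]) (simp add: e)
qed

lemma prime_exists:
  fixes d :: "'a::idom"
  assumes PID: "is_PID_type TYPE('a)" and d: "\<not> d dvd 1"
  shows "\<exists>q. q dvd d \<and> \<not> q dvd 1 \<and> (\<forall>x y. q dvd x * y \<longrightarrow> q dvd x \<or> q dvd y)"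
proof -
  define A where "A = {I::'a set. is_ideal I \<and> d \<in> I \<and> 1 \<notin> I}"
  have pd: "{r * d | r. True} \<in> A"
  proof -
    have "1 \<notin> {r * d |r. True}"
    proof
      assume "1 \<in> {r * d |r. True}"
      then obtain r where "1 = r * d" by auto
      then have "d dvd 1" by (metis dvd_triv_right)
      then show False using d by blast
    qed
    moreover have "d \<in> {r * d |r. True}" by (metis (mono_tags, lifting) mem_Collect_eq mult_1)
    ultimately show ?thesis unfolding A_def using principal_ideal[of d] by simp
  qed
  have "\<exists>M\<in>A. \<forall>X\<in>A. M \<subseteq> X \<longrightarrow> X = M"
  proof (rule Zorn_Lemma2, intro ballI)
    fix C assume C: "C \<in> chains A"
    show "\<exists>U\<in>A. \<forall>X\<in>C. X \<subseteq> U"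
    proof (cases "C = {}")
      case True then show ?thesis using pd by blast
    next
      case False
      have CA: "C \<subseteq> A" and ch: "\<forall>x\<in>C. \<forall>y\<in>C. x \<subseteq> y \<or> y \<subseteq> x"
        using C unfolding chains_def chain_subset_def by auto
      have "\<Union>C \<in> A" unfolding A_def
      proof (intro CollectI conjI)
        show "is_ideal (\<Union>C)" unfolding is_ideal_def
        proof (intro conjI ballI allI)
          obtain I where "I \<in> C" using False by blast
          then have "0 \<in> I" using CA unfolding A_def is_ideal_def by blast
          then show "0 \<in> \<Union>C" using \<open>I \<in> C\<close> by blast
        next
          fix a b assume "a \<in> \<Union>C" "b \<in> \<Union>C"
          then obtain I J where "I \<in> C" "J \<in> C" "a \<in> I" "b \<in> J" by auto
          moreover have "is_ideal I" "is_ideal J" using \<open>I \<in> C\<close> \<open>J \<in> C\<close> CA unfolding A_def by auto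
          moreover have "I \<subseteq> J \<or> J \<subseteq> I" using ch \<open>I \<in> C\<close> \<open>J \<in> C\<close> by blast
          ultimately have "a + b \<in> I \<or> a + b \<in> J" unfolding is_ideal_def by blast
          then show "a + b \<in> \<Union>C" using \<open>I \<in> C\<close> \<open>J \<in> C\<close> by blast
        next
          fix a r assume "a \<in> \<Union>C"
          then obtain I where "I \<in> C" "a \<in> I" by auto
          then show "r * a \<in> \<Union>C" using CA unfolding A_def is_ideal_def by blast
        qed
        obtain I where "I \<in> C" using False by blast
        then have "d \<in> I" using CA unfolding A_def by blast
        then show "d \<in> \<Union>C" using \<open>I \<in> C\<close> by blast
        show "1 \<notin> \<Union>C" using CA unfolding A_def by blast
      qed
      then show ?thesis by blast
    qed
  qed
  then obtain M where MA: "M \<in> A" and Mmax: "\<And>X. X \<in> A \<Longrightarrow> M \<subseteq> X \<Longrightarrow> X = M" by blast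
  have Mi: "is_ideal M" "d \<in> M" "1 \<notin> M" using MA unfolding A_def by auto
  obtain q where q: "M = {r * q | r. True}" using PID Mi(1) unfolding is_PID_type_def by blast
  have "q dvd d" using Mi(2) q by auto
  moreover have "\<not> q dvd 1"
  proof
    assume "q dvd 1" then obtain w where "1 = q * w" by (auto simp: dvd_def)
    then have "1 \<in> M" using q by (auto simp: mult.commute)
    then show False using Mi by blast
  qed
  moreover have "q dvd x \<or> q dvd y" if xy: "q dvd x * y" for x y
  proof (cases "q dvd x")
    case True then show ?thesis by blast
  next
    case False note nx = this
    define N where "N = {s * q + t * x | s t. True}"
    have Ni: "is_ideal N" unfolding N_def by (rule two_gen_ideal)
    have MN: "M \<subseteq> N"
    proof
      fix z assume "z \<in> M" then obtain r where "z = r * q" using q by auto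
      then have "z = r * q + 0 * x" by simp
      then show "z \<in> N" unfolding N_def by blast
    qed
    have "x \<in> N" unfolding N_def by (rule CollectI, rule exI[of _ 0], rule exI[of _ 1], simp)
    have "x \<notin> M" using nx q by auto
    have "1 \<in> N"
    proof (rule ccontr)
      assume "1 \<notin> N"
      then have "N \<in> A" using Ni MN Mi unfolding A_def by auto
      then have "N = M" using Mmax MN by blast
      then show False using \<open>x \<in> N\<close> \<open>x \<notin> M\<close> by blast
    qed
    then obtain s t where st: "1 = s * q + t * x" unfolding N_def by auto
    have "y = s * q * y + t * (x * y)" by (subst mult_1_left[symmetric], subst st) (simp add: algebra_simps)
    also have "q dvd \<dots>" using xy by (intro dvd_add) (auto simp: dvd_mult)
    finally show ?thesis by blast
  qed
  ultimately show ?thesis by blast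
qed

lemma gauss_prime:
  fixes f g :: "'a::idom poly"
  assumes pr: "\<And>x y. q dvd x * y \<Longrightarrow> q dvd x \<or> q dvd y"
    and d: "\<And>n. q dvd coeff (f * g) n"
  shows "(\<forall>i. q dvd coeff f i) \<or> (\<forall>j. q dvd coeff g j)"
proof (rule ccontr)
  assume "\<not> ?thesis"
  then obtain i0 j0 where "\<not> q dvd coeff f i0" "\<not> q dvd coeff g j0" by auto
  define i where "i = (LEAST i. \<not> q dvd coeff f i)"
  define j where "j = (LEAST j. \<not> q dvd coeff g j)"
  have fi: "\<not> q dvd coeff f i" unfolding i_def by (rule LeastI) fact
  have gj: "\<not> q dvd coeff g j" unfolding j_def by (rule LeastI) fact
  have fk: "q dvd coeff f k" if "k < i" for k using not_less_Least that unfolding i_def by blast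
  have gk: "q dvd coeff g k" if "k < j" for k using not_less_Least that unfolding j_def by blast
  have "coeff (f * g) (i + j) = coeff f i * coeff g j + (\<Sum>k\<in>{..i+j} - {i}. coeff f k * coeff g (i + j - k))"
    unfolding coeff_mult by (subst sum.remove[of _ i]) auto
  moreover have "q dvd (\<Sum>k\<in>{..i+j} - {i}. coeff f k * coeff g (i + j - k))"
  proof (rule dvd_sum)
    fix k assume "k \<in> {..i+j} - {i}"
    then have "k < i \<or> (i < k \<and> i + j - k < j)" by auto
    then show "q dvd coeff f k * coeff g (i + j - k)" using fk gk by (auto simp: dvd_mult dvd_mult2)
  qed
  ultimately have "q dvd coeff (f * g) (i + j) - (\<Sum>k\<in>{..i+j} - {i}. coeff f k * coeff g (i + j - k))"
    using d[of "i+j"] by (intro dvd_diff) auto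
  then have "q dvd coeff f i * coeff g j"
    using \<open>coeff (f * g) (i + j) = _\<close> by simp
  then show False using pr fi gj by blast
qed

lemma prim_mult:
  fixes f g :: "'a::idom poly"
  assumes PID: "is_PID_type TYPE('a)" and f: "primitive f" and g: "primitive g"
  shows "primitive (f * g)"
  unfolding primitive_def
proof (intro conjI allI impI)
  show "f * g \<noteq> 0" using f g unfolding primitive_def by auto
  fix d assume d: "\<forall>i. d dvd coeff (f * g) i"
  show "d dvd 1"
  proof (rule ccontr)
    assume "\<not> d dvd 1"
    then obtain q where q: "q dvd d" "\<not> q dvd 1" "\<And>x y. q dvd x * y \<Longrightarrow> q dvd x \<or> q dvd y"
      using prime_exists[OF PID] by blast
    have "\<And>n. q dvd coeff (f * g) n" using d q(1) dvd_trans by blast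
    then have "(\<forall>i. q dvd coeff f i) \<or> (\<forall>j. q dvd coeff g j)" using gauss_prime q(3) by blast
    then show False using f g q(2) unfolding primitive_def by blast
  qed
qed

lemma prim_power:
  fixes f :: "'a::idom poly"
  assumes PID: "is_PID_type TYPE('a)" and f: "primitive f"
  shows "primitive (f ^ n)"
proof (induction n)
  case 0 then show ?case unfolding primitive_def
    by (auto simp: coeff_1)
next
  case (Suc n) then show ?case using prim_mult[OF PID f] by simp
qed



lemma fld_scale:
  fixes a b c da db dc sa sb sc :: "'b::field"
  assumes "b \<noteq> 0" "c \<noteq> 0" "sb \<noteq> 0" "sc \<noteq> 0"
  shows "(sa * dc + da * c) / (b * c) - (sa * sc) * (sb * dc + db * c) / ((sb * sc) * (b * c))
       = da / b - sa * db / (sb * b)"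
  using assms by (simp add: field_simps)

lemma fld_add:
  fixes a b c e da db dc de sa sb sc se :: "'b::field"
  assumes "b \<noteq> 0" "e \<noteq> 0" "sb \<noteq> 0" "se \<noteq> 0"
    and cm: "(sb - b) * de = (se - e) * db"
  shows "(sa * de + da * e + (sc * db + dc * b)) / (b * e)
     - (sa * se + sc * sb) * (sb * de + db * e) / ((sb * se) * (b * e))
     = (da / b - sa * db / (sb * b)) + (dc / e - sc * de / (se * e))"
proof -
  have "sb * de = b * de + (se - e) * db" using cm by (simp add: algebra_simps)
  then show ?thesis using assms by (simp add: field_simps) algebra
qed

lemma fld_mult:
  fixes a b c e da db dc de sa sb sc se :: "'b::field"
  assumes "b \<noteq> 0" "e \<noteq> 0" "sb \<noteq> 0" "se \<noteq> 0"
    and cm: "(sb - b) * de = (se - e) * db" and cm2: "(sb - b) * dc = (sc - c) * db"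
  shows "(sa * dc + da * c) / (b * e) - (sa * sc) * (sb * de + db * e) / ((sb * se) * (b * e))
     = (sa / sb) * (dc / e - sc * de / (se * e)) + (da / b - sa * db / (sb * b)) * (c / e)"
proof -
  have "sb * de = b * de + (se - e) * db" using cm by (simp add: algebra_simps)
  moreover have "sb * dc = b * dc + (sc - c) * db" using cm2 by (simp add: algebra_simps)
  ultimately show ?thesis using assms by (simp add: field_simps) algebra
qed



locale ore_ctx =
  fixes \<gamma> \<tau> :: "'a::idom" and \<sigma> \<delta> :: "'a poly \<Rightarrow> 'a poly"
  assumes unit: "\<gamma> dvd 1" and sigma: "\<And>p. \<sigma> p = pcompose p [:\<tau>, \<gamma>:]"
    and d_add: "\<And>p q. \<delta> (p + q) = \<delta> p + \<delta> q"
    and d_mult: "\<And>p q. \<delta> (p * q) = \<sigma> p * \<delta> q + \<delta> p * q"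
begin

lemma s_add: "\<sigma> (p + q) = \<sigma> p + \<sigma> q" by (simp add: sigma pcompose_add)
lemma s_mult: "\<sigma> (p * q) = \<sigma> p * \<sigma> q" by (simp add: sigma pcompose_mult)
lemma s_smult: "\<sigma> (smult a p) = smult a (\<sigma> p)" by (simp add: sigma pcompose_smult)
lemma s_const: "\<sigma> [:a:] = [:a:]" by (simp add: sigma)
lemma s_0: "\<sigma> 0 = 0" by (simp add: sigma)
lemma s_1: "\<sigma> 1 = 1" by (simp add: sigma pcompose_1)
lemma s_diff: "\<sigma> (p - q) = \<sigma> p - \<sigma> q" by (simp add: sigma pcompose_diff)
lemma gnz: "\<gamma> \<noteq> 0" using unit by auto
lemma s_degree: "degree (\<sigma> p) = degree p" using gnz by (simp add: sigma degree_pcompose)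

lemma s_eq0: "\<sigma> p = 0 \<longleftrightarrow> p = 0"
proof
  assume "\<sigma> p = 0"
  then have "degree p = 0" using s_degree[of p] by simp
  then obtain a where "p = [:a:]" by (metis degree_eq_zeroE)
  then show "p = 0" using \<open>\<sigma> p = 0\<close> by (simp add: s_const)
qed (simp add: s_0)

lemma s_inj: "\<sigma> p = \<sigma> q \<Longrightarrow> p = q"
  using s_eq0[of "p - q"] by (simp add: s_diff)

definition gi where "gi = (SOME g. \<gamma> * g = 1)"
lemma gi: "\<gamma> * gi = 1"
proof -
  obtain g where "1 = \<gamma> * g" using unit by (auto simp: dvd_def)
  then show ?thesis unfolding gi_def by (metis (mono_tags) someI)
qed

definition si where "si p = pcompose p [:- \<tau> * gi, gi:]"

lemma s_si: "\<sigma> (si p) = p"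
proof -
  have "pcompose [:- \<tau> * gi, gi:] [:\<tau>, \<gamma>:] = [:0, 1:]"
    using gi by (simp add: pcompose_pCons algebra_simps)
  then show ?thesis unfolding si_def sigma by (simp add: pcompose_assoc[symmetric])
qed

lemma si_s: "si (\<sigma> p) = p"
proof -
  have "pcompose [:\<tau>, \<gamma>:] [:- \<tau> * gi, gi:] = [:0, 1:]"
    using gi by (simp add: pcompose_pCons algebra_simps)
  then show ?thesis unfolding si_def sigma by (simp add: pcompose_assoc[symmetric])
qed

lemma inv_s: "inv \<sigma> = si"
  by (rule inv_equality) (simp_all add: si_s s_si)

lemma si_add: "si (p + q) = si p + si q" by (simp add: si_def pcompose_add)
lemma si_mult: "si (p * q) = si p * si q" by (simp add: si_def pcompose_mult)
lemma si_smult: "si (smult a p) = smult a (si p)" by (simp add: si_def pcompose_smult)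
lemma si_eq0: "si p = 0 \<longleftrightarrow> p = 0" by (metis s_si s_0 s_eq0)

lemma sp_smult: "(\<sigma> ^^ n) (smult a p) = smult a ((\<sigma> ^^ n) p)"
  by (induction n) (simp_all add: s_smult)
lemma sip_smult: "(si ^^ n) (smult a p) = smult a ((si ^^ n) p)"
  by (induction n) (simp_all add: si_smult)
lemma sp_eq0: "(\<sigma> ^^ n) p = 0 \<longleftrightarrow> p = 0"
  by (induction n) (simp_all add: s_eq0)
lemma sip_eq0: "(si ^^ n) p = 0 \<longleftrightarrow> p = 0"
  by (induction n) (simp_all add: si_eq0)
lemma sp_mult: "(\<sigma> ^^ n) (p * q) = (\<sigma> ^^ n) p * (\<sigma> ^^ n) q"
  by (induction n) (simp_all add: s_mult)
lemma sip_mult: "(si ^^ n) (p * q) = (si ^^ n) p * (si ^^ n) q"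
  by (induction n) (simp_all add: si_mult)
lemma funpow_cancel: fixes f g :: "'b \<Rightarrow> 'b" assumes "\<And>x. g (f x) = x" shows "(g ^^ n) ((f ^^ n) x) = x"
proof (induction n arbitrary: x)
  case (Suc n)
  have "(g ^^ Suc n) y = (g ^^ n) (g y)" for y by (simp add: funpow_swap1)
  then have "(g ^^ Suc n) ((f ^^ Suc n) x) = (g ^^ n) (g (f ((f ^^ n) x)))" by simp
  also have "\<dots> = x" using Suc assms by simp
  finally show ?case .
qed simp

lemma sip_sp: "(si ^^ n) ((\<sigma> ^^ n) p) = p" by (rule funpow_cancel) (rule si_s)
lemma sp_sip: "(\<sigma> ^^ n) ((si ^^ n) p) = p" by (rule funpow_cancel) (rule s_si)

lemma d_0: "\<delta> 0 = 0"
proof -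
  have "\<delta> 0 + \<delta> 0 = \<delta> 0 + 0" using d_add[of 0 0] by simp
  then show ?thesis by (rule add_left_imp_eq)
qed
lemma d_1: "\<delta> 1 = 0"
proof -
  have "\<delta> 1 + \<delta> 1 = \<delta> 1 + 0" using d_mult[of 1 1] by (simp add: s_1)
  then show ?thesis by (rule add_left_imp_eq)
qed
lemma d_comm: "(\<sigma> p - p) * \<delta> q = (\<sigma> q - q) * \<delta> p"
  using d_mult[of p q] d_mult[of q p] by (simp add: algebra_simps)

lemma Fract_div: "Fract a b = Fract a 1 / Fract b 1" by simp

lemma fmap_Fract: assumes b: "b \<noteq> 0" shows "fmap \<sigma> (Fract a b) = Fract (\<sigma> a) (\<sigma> b)"
proof -
  have ex: "\<exists>x. (\<lambda>(a', b'). b' \<noteq> 0 \<and> Fract a b = Fract a' b') x"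
    by (rule exI[of _ "(a, b)"]) (simp add: b)
  obtain a' b' where ab: "(SOME x. (\<lambda>(a', b'). b' \<noteq> 0 \<and> Fract a b = Fract a' b') x) = (a', b')"
    by (rule prod.exhaust)
  have h: "b' \<noteq> 0" "Fract a b = Fract a' b'" using someI_ex[OF ex] ab by auto
  then have "a * b' = a' * b" using b by (simp add: eq_fract)
  then have "\<sigma> a * \<sigma> b' = \<sigma> a' * \<sigma> b" by (metis s_mult)
  then have "Fract (\<sigma> a') (\<sigma> b') = Fract (\<sigma> a) (\<sigma> b)" using b h by (simp add: eq_fract s_eq0)
  then show ?thesis unfolding fmap_def using ab by simp
qed

definition FF where "FF a b = Fract (\<delta> a) b - Fract (\<sigma> a * \<delta> b) (\<sigma> b * b)"

abbreviation fr :: "'a poly \<Rightarrow> 'a poly fract" where "fr p \<equiv> Fract p 1"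

lemma fr_mult: "fr (p * q) = fr p * fr q" by simp
lemma fr_add: "fr (p + q) = fr p + fr q" by simp
lemma fr_diff: "fr (p - q) = fr p - fr q" by simp
lemma fr_eq0: "fr p = 0 \<longleftrightarrow> p = 0" by (simp add: Zero_fract_def eq_fract)
lemma fr_inj: "fr p = fr q \<longleftrightarrow> p = q" by (simp add: eq_fract)

lemma FF_form: "FF a b = fr (\<delta> a) / fr b - fr (\<sigma> a) * fr (\<delta> b) / (fr (\<sigma> b) * fr b)"
  unfolding FF_def by simp

lemma FF_scale: assumes "b \<noteq> 0" "c \<noteq> 0" shows "FF (a * c) (b * c) = FF a b"
proof -
  have nz: "fr b \<noteq> 0" "fr c \<noteq> 0" "fr (\<sigma> b) \<noteq> 0" "fr (\<sigma> c) \<noteq> 0"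
    using assms by (simp_all add: fr_eq0 s_eq0)
  show ?thesis unfolding FF_form d_mult s_mult fr_mult fr_add
    using fld_scale[OF nz, of "fr (\<sigma> a)" "fr (\<delta> c)" "fr (\<delta> a)" "fr (\<delta> b)"] by simp
qed

lemma FF_wd: assumes "b \<noteq> 0" "b' \<noteq> 0" "a * b' = a' * b" shows "FF a b = FF a' b'"
proof -
  have "FF a b = FF (a * b') (b * b')" by (rule FF_scale[symmetric]) (use assms in auto)
  also have "\<dots> = FF (a' * b) (b' * b)" by (simp only: assms(3) mult.commute[of b b'])
  also have "\<dots> = FF a' b'" by (rule FF_scale) (use assms in auto)
  finally show ?thesis .
qed

lemma fder_Fract: assumes b: "b \<noteq> 0" shows "fder \<sigma> \<delta> (Fract a b) = FF a b"
proof -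
  have ex: "\<exists>x. (\<lambda>(a', b'). b' \<noteq> 0 \<and> Fract a b = Fract a' b') x"
    by (rule exI[of _ "(a, b)"]) (simp add: b)
  obtain a' b' where ab: "(SOME x. (\<lambda>(a', b'). b' \<noteq> 0 \<and> Fract a b = Fract a' b') x) = (a', b')"
    by (rule prod.exhaust)
  have h: "b' \<noteq> 0" "Fract a b = Fract a' b'" using someI_ex[OF ex] ab by auto
  then have "a * b' = a' * b" using b by (simp add: eq_fract)
  then have "FF a' b' = FF a b" using b h FF_wd by metis
  then show ?thesis unfolding fder_def using ab by (simp add: FF_def)
qed

end


context ore_ctx begin

lemma fmap_fr: "fmap \<sigma> (fr p) = fr (\<sigma> p)"
  using fmap_Fract[of 1 p] by (simp add: s_1)

lemma fmap_add: "fmap \<sigma> (x + y) = fmap \<sigma> x + fmap \<sigma> y"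
proof -
  obtain a b where x: "x = Fract a b" "b \<noteq> 0" by (cases x) auto
  obtain c e where y: "y = Fract c e" "e \<noteq> 0" by (cases y) auto
  show ?thesis using x y by (simp add: fmap_Fract s_add s_mult s_eq0)
qed

lemma fmap_mult: "fmap \<sigma> (x * y) = fmap \<sigma> x * fmap \<sigma> y"
proof -
  obtain a b where x: "x = Fract a b" "b \<noteq> 0" by (cases x) auto
  obtain c e where y: "y = Fract c e" "e \<noteq> 0" by (cases y) auto
  show ?thesis using x y by (simp add: fmap_Fract s_add s_mult s_eq0)
qed

lemma fmap_0: "fmap \<sigma> 0 = 0"
  using fmap_fr[of 0] by (simp add: s_0 Zero_fract_def)

lemma fmap_eq0: "fmap \<sigma> x = 0 \<longleftrightarrow> x = 0"
proof -
  obtain a b where x: "x = Fract a b" "b \<noteq> 0" by (cases x) auto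
  show ?thesis using x by (simp add: fmap_Fract s_eq0 Zero_fract_def eq_fract)
qed

lemma fder_fr: "fder \<sigma> \<delta> (fr p) = fr (\<delta> p)"
  using fder_Fract[of 1 p] by (simp add: FF_def d_1 s_1 Zero_fract_def[symmetric])

lemma fder_0: "fder \<sigma> \<delta> 0 = 0"
  using fder_fr[of 0] by (simp add: d_0 Zero_fract_def)

lemma Fract_fr: "b \<noteq> 0 \<Longrightarrow> Fract a b = fr a / fr b" by simp

lemma fder_add: "fder \<sigma> \<delta> (x + y) = fder \<sigma> \<delta> x + fder \<sigma> \<delta> y"
proof -
  obtain a b where x: "x = Fract a b" "b \<noteq> 0" by (cases x) auto
  obtain c e where y: "y = Fract c e" "e \<noteq> 0" by (cases y) auto
  have xy: "x + y = Fract (a * e + c * b) (b * e)" using x y by simp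
  have nz: "fr b \<noteq> 0" "fr e \<noteq> 0" "fr (\<sigma> b) \<noteq> 0" "fr (\<sigma> e) \<noteq> 0"
    using x y by (simp_all add: fr_eq0 s_eq0)
  have cm: "(fr (\<sigma> b) - fr b) * fr (\<delta> e) = (fr (\<sigma> e) - fr e) * fr (\<delta> b)"
    using arg_cong[OF d_comm[of b e], of fr] by (simp only: fr_mult fr_diff)
  have L: "(fr (\<sigma> a) * fr (\<delta> e) + fr (\<delta> a) * fr e + (fr (\<sigma> c) * fr (\<delta> b) + fr (\<delta> c) * fr b)) / (fr b * fr e)
     - (fr (\<sigma> a) * fr (\<sigma> e) + fr (\<sigma> c) * fr (\<sigma> b)) * (fr (\<sigma> b) * fr (\<delta> e) + fr (\<delta> b) * fr e) / ((fr (\<sigma> b) * fr (\<sigma> e)) * (fr b * fr e))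
     = (fr (\<delta> a) / fr b - fr (\<sigma> a) * fr (\<delta> b) / (fr (\<sigma> b) * fr b)) + (fr (\<delta> c) / fr e - fr (\<sigma> c) * fr (\<delta> e) / (fr (\<sigma> e) * fr e))"
    by (rule fld_add[OF nz cm])
  have "fder \<sigma> \<delta> (x + y) = FF (a * e + c * b) (b * e)" using xy x y by (simp add: fder_Fract)
  also have "\<dots> = (fr (\<sigma> a) * fr (\<delta> e) + fr (\<delta> a) * fr e + (fr (\<sigma> c) * fr (\<delta> b) + fr (\<delta> c) * fr b)) / (fr b * fr e)
     - (fr (\<sigma> a) * fr (\<sigma> e) + fr (\<sigma> c) * fr (\<sigma> b)) * (fr (\<sigma> b) * fr (\<delta> e) + fr (\<delta> b) * fr e) / ((fr (\<sigma> b) * fr (\<sigma> e)) * (fr b * fr e))"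
    unfolding FF_form d_add d_mult s_add s_mult by (simp only: fr_mult fr_add)
  also have "\<dots> = FF a b + FF c e" unfolding L FF_form ..
  also have "\<dots> = fder \<sigma> \<delta> x + fder \<sigma> \<delta> y" using x y by (simp add: fder_Fract)
  finally show ?thesis .
qed

lemma fder_mult: "fder \<sigma> \<delta> (x * y) = fmap \<sigma> x * fder \<sigma> \<delta> y + fder \<sigma> \<delta> x * y"
proof -
  obtain a b where x: "x = Fract a b" "b \<noteq> 0" by (cases x) auto
  obtain c e where y: "y = Fract c e" "e \<noteq> 0" by (cases y) auto
  have xy: "x * y = Fract (a * c) (b * e)" using x y by simp
  have nz: "fr b \<noteq> 0" "fr e \<noteq> 0" "fr (\<sigma> b) \<noteq> 0" "fr (\<sigma> e) \<noteq> 0"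
    using x y by (simp_all add: fr_eq0 s_eq0)
  have cm: "(fr (\<sigma> b) - fr b) * fr (\<delta> e) = (fr (\<sigma> e) - fr e) * fr (\<delta> b)"
    using arg_cong[OF d_comm[of b e], of fr] by (simp only: fr_mult fr_diff)
  have cm2: "(fr (\<sigma> b) - fr b) * fr (\<delta> c) = (fr (\<sigma> c) - fr c) * fr (\<delta> b)"
    using arg_cong[OF d_comm[of b c], of fr] by (simp only: fr_mult fr_diff)
  have L: "(fr (\<sigma> a) * fr (\<delta> c) + fr (\<delta> a) * fr c) / (fr b * fr e) - (fr (\<sigma> a) * fr (\<sigma> c)) * (fr (\<sigma> b) * fr (\<delta> e) + fr (\<delta> b) * fr e) / ((fr (\<sigma> b) * fr (\<sigma> e)) * (fr b * fr e))
     = (fr (\<sigma> a) / fr (\<sigma> b)) * (fr (\<delta> c) / fr e - fr (\<sigma> c) * fr (\<delta> e) / (fr (\<sigma> e) * fr e)) + (fr (\<delta> a) / fr b - fr (\<sigma> a) * fr (\<delta> b) / (fr (\<sigma> b) * fr b)) * (fr c / fr e)"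
    by (rule fld_mult[OF nz cm cm2])
  have "fder \<sigma> \<delta> (x * y) = FF (a * c) (b * e)" using xy x y by (simp add: fder_Fract)
  also have "\<dots> = (fr (\<sigma> a) * fr (\<delta> c) + fr (\<delta> a) * fr c) / (fr b * fr e) - (fr (\<sigma> a) * fr (\<sigma> c)) * (fr (\<sigma> b) * fr (\<delta> e) + fr (\<delta> b) * fr e) / ((fr (\<sigma> b) * fr (\<sigma> e)) * (fr b * fr e))"
    unfolding FF_form d_add d_mult s_add s_mult by (simp only: fr_mult fr_add)
  also have "\<dots> = (fr (\<sigma> a) / fr (\<sigma> b)) * FF c e + FF a b * (fr c / fr e)" unfolding L FF_form ..
  also have "\<dots> = fmap \<sigma> x * fder \<sigma> \<delta> y + fder \<sigma> \<delta> x * y"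
    using x y by (simp add: fder_Fract fmap_Fract s_eq0)
  finally show ?thesis .
qed

end


lemma smult_sum_poly: "smult c (sum f A) = (\<Sum>x\<in>A. smult c (f x))"
  by (simp add: poly_eq_iff coeff_sum sum_distrib_left)

context ore_ctx begin

lemma coeff_dmul: "coeff (dmul \<sigma> \<delta> X) n = (if n = 0 then 0 else fmap \<sigma> (coeff X (n - 1))) + fder \<sigma> \<delta> (coeff X n)"
  by (cases n) (simp_all add: dmul_def coeff_map_poly fmap_0 fder_0)

lemma dmul_add: "dmul \<sigma> \<delta> (X + Y) = dmul \<sigma> \<delta> X + dmul \<sigma> \<delta> Y"
  by (simp add: poly_eq_iff coeff_dmul fmap_add fder_add algebra_simps)

lemma dmul_0: "dmul \<sigma> \<delta> 0 = 0"
  by (simp add: poly_eq_iff coeff_dmul fmap_0 fder_0)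

lemma dmul_smult: "dmul \<sigma> \<delta> (smult a X) = smult (fmap \<sigma> a) (dmul \<sigma> \<delta> X) + smult (fder \<sigma> \<delta> a) X"
  by (simp add: poly_eq_iff coeff_dmul fmap_mult fder_mult algebra_simps fmap_0)

lemma dmul_sum: "dmul \<sigma> \<delta> (sum f A) = (\<Sum>x\<in>A. dmul \<sigma> \<delta> (f x))"
  by (induction A rule: infinite_finite_induct) (simp_all add: dmul_0 dmul_add)

lemma dmul_degree:
  assumes X: "X \<noteq> 0"
  shows "degree (dmul \<sigma> \<delta> X) = Suc (degree X) \<and> lead_coeff (dmul \<sigma> \<delta> X) = fmap \<sigma> (lead_coeff X)"
proof -
  have c: "coeff (dmul \<sigma> \<delta> X) (Suc (degree X)) = fmap \<sigma> (lead_coeff X)"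
    by (simp add: coeff_dmul coeff_eq_0 fder_0)
  have nz: "fmap \<sigma> (lead_coeff X) \<noteq> 0" using X by (simp add: fmap_eq0)
  have "degree (dmul \<sigma> \<delta> X) \<le> Suc (degree X)"
    by (rule degree_le) (auto simp: coeff_dmul coeff_eq_0 fmap_0 fder_0)
  moreover have "Suc (degree X) \<le> degree (dmul \<sigma> \<delta> X)"
    by (rule le_degree) (simp add: c nz)
  ultimately have d: "degree (dmul \<sigma> \<delta> X) = Suc (degree X)" by simp
  then show ?thesis using c by simp
qed

lemma dmul_pow:
  assumes X: "X \<noteq> 0"
  shows "(dmul \<sigma> \<delta> ^^ i) X \<noteq> 0 \<and> degree ((dmul \<sigma> \<delta> ^^ i) X) = degree X + i"
proof (induction i)
  case (Suc i)
  then show ?case using dmul_degree[of "(dmul \<sigma> \<delta> ^^ i) X"] by auto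
qed (simp add: X)

lemma ore_mult_gen:
  assumes "degree A \<le> N"
  shows "ore_mult \<sigma> \<delta> A B = (\<Sum>i\<le>N. smult (coeff A i) ((dmul \<sigma> \<delta> ^^ i) B))"
  unfolding ore_mult_def
  by (rule sum.mono_neutral_left) (use assms in \<open>auto simp: coeff_eq_0\<close>)

lemma ore_mult_add: "ore_mult \<sigma> \<delta> (A + A') B = ore_mult \<sigma> \<delta> A B + ore_mult \<sigma> \<delta> A' B"
proof -
  define N where "N = max (degree A) (degree A')"
  have "degree (A + A') \<le> N" unfolding N_def by (rule degree_add_le) auto
  then show ?thesis
    by (simp add: ore_mult_gen[of _ N] N_def smult_add_left sum.distrib)
qed

lemma ore_mult_smult: "ore_mult \<sigma> \<delta> (smult a A) B = smult a (ore_mult \<sigma> \<delta> A B)"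
proof -
  have "degree (smult a A) \<le> degree A" by (rule degree_smult_le)
  then show ?thesis
    by (simp add: ore_mult_gen[of _ "degree A"] smult_sum_poly)
qed

lemma ore_mult_0: "ore_mult \<sigma> \<delta> 0 B = 0"
  by (simp add: ore_mult_def)

lemma ore_mult_dmul: "ore_mult \<sigma> \<delta> (dmul \<sigma> \<delta> A) B = dmul \<sigma> \<delta> (ore_mult \<sigma> \<delta> A B)"
proof -
  define N where "N = degree A"
  define D where "D = (\<lambda>i. (dmul \<sigma> \<delta> ^^ i) B)"
  have dg: "degree (dmul \<sigma> \<delta> A) \<le> Suc N"
    unfolding N_def by (rule degree_le) (auto simp: coeff_dmul coeff_eq_0 fmap_0 fder_0)
  have "ore_mult \<sigma> \<delta> (dmul \<sigma> \<delta> A) B = (\<Sum>i\<le>Suc N. smult (coeff (dmul \<sigma> \<delta> A) i) (D i))"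
    unfolding D_def by (rule ore_mult_gen[OF dg])
  also have "\<dots> = (\<Sum>i\<le>Suc N. smult (if i = 0 then 0 else fmap \<sigma> (coeff A (i - 1))) (D i))
      + (\<Sum>i\<le>Suc N. smult (fder \<sigma> \<delta> (coeff A i)) (D i))"
    by (simp add: coeff_dmul smult_add_left sum.distrib)
  also have "(\<Sum>i\<le>Suc N. smult (if i = 0 then 0 else fmap \<sigma> (coeff A (i - 1))) (D i))
      = (\<Sum>i\<le>N. smult (fmap \<sigma> (coeff A i)) (D (Suc i)))"
    by (subst sum.atMost_Suc_shift) simp
  also have "(\<Sum>i\<le>Suc N. smult (fder \<sigma> \<delta> (coeff A i)) (D i)) = (\<Sum>i\<le>N. smult (fder \<sigma> \<delta> (coeff A i)) (D i))"
    by (subst sum.atMost_Suc) (simp add: N_def coeff_eq_0 fder_0)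
  also have "(\<Sum>i\<le>N. smult (fmap \<sigma> (coeff A i)) (D (Suc i))) + (\<Sum>i\<le>N. smult (fder \<sigma> \<delta> (coeff A i)) (D i))
      = dmul \<sigma> \<delta> (\<Sum>i\<le>N. smult (coeff A i) (D i))"
    by (simp add: dmul_sum dmul_smult sum.distrib D_def)
  also have "\<dots> = dmul \<sigma> \<delta> (ore_mult \<sigma> \<delta> A B)" by (simp add: ore_mult_def N_def D_def)
  finally show ?thesis .
qed

lemma ore_mult_degree:
  assumes P: "P \<noteq> 0" and B: "B \<noteq> 0"
  shows "degree (ore_mult \<sigma> \<delta> P B) = degree P + degree B"
proof -
  define d where "d = degree P"
  define m where "m = degree B"
  define f where "f = (\<lambda>i. smult (coeff P i) ((dmul \<sigma> \<delta> ^^ i) B))"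
  have o: "ore_mult \<sigma> \<delta> P B = (\<Sum>i\<le>d. f i)" unfolding ore_mult_def d_def f_def ..
  have df: "degree (f i) \<le> i + m" for i
    unfolding f_def m_def using degree_smult_le dmul_pow[OF B, of i] by (metis add.commute)
  have "degree (\<Sum>i\<le>d. f i) \<le> d + m"
  proof (rule degree_sum_le)
    fix p assume "p \<in> {..d}"
    then show "degree (f p) \<le> d + m" by (intro order_trans[OF df]) simp
  qed simp
  moreover have "coeff (\<Sum>i\<le>d. f i) (d + m) \<noteq> 0"
  proof -
    have "coeff (\<Sum>i\<le>d. f i) (d + m) = coeff (f d) (d + m) + (\<Sum>i\<in>{..d} - {d}. coeff (f i) (d + m))"
      unfolding coeff_sum by (subst sum.remove[of _ d]) auto
    also have "(\<Sum>i\<in>{..d} - {d}. coeff (f i) (d + m)) = 0"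
    proof (rule sum.neutral, intro ballI)
      fix i assume "i \<in> {..d} - {d}"
      then have "degree (f i) < d + m" using df[of i] by auto
      then show "coeff (f i) (d + m) = 0" by (simp add: coeff_eq_0)
    qed
    also have "coeff (f d) (d + m) = coeff P d * lead_coeff ((dmul \<sigma> \<delta> ^^ d) B)"
      unfolding f_def using dmul_pow[OF B, of d] by (simp add: m_def add.commute)
    finally have e: "coeff (\<Sum>i\<le>d. f i) (d + m) = coeff P d * lead_coeff ((dmul \<sigma> \<delta> ^^ d) B)" by simp
    have "lead_coeff ((dmul \<sigma> \<delta> ^^ d) B) \<noteq> 0" using dmul_pow[OF B, of d] by (simp del: leading_coeff_0_iff) (metis leading_coeff_0_iff)
    moreover have "coeff P d \<noteq> 0" using P by (simp add: d_def)
    ultimately show ?thesis unfolding e by simp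
  qed
  then have "d + m \<le> degree (\<Sum>i\<le>d. f i)" by (rule le_degree)
  ultimately show ?thesis using o by (simp add: d_def m_def)
qed

lemma coeff_emb: "coeff (emb (T::'a poly poly)) i = fr (coeff T i)"
  by (simp add: emb_def coeff_map_poly Zero_fract_def)
lemma emb_inj: "emb (T::'a poly poly) = emb T' \<longleftrightarrow> T = T'"
  by (metis coeff_emb fr_inj poly_eqI)
lemma emb_0: "emb (0::'a poly poly) = 0" by (simp add: emb_def)
lemma emb_eq0: "emb (T::'a poly poly) = 0 \<longleftrightarrow> T = 0" using emb_inj[of T 0] by (simp add: emb_0)
lemma emb_add: "emb ((T::'a poly poly) + T') = emb T + emb T'" by (rule poly_eqI) (simp add: coeff_emb)
lemma emb_smult: "emb (smult c (T::'a poly poly)) = smult (fr c) (emb T)" by (rule poly_eqI) (simp add: coeff_emb)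
lemma degree_emb: "degree (emb (T::'a poly poly)) = degree T"
  unfolding emb_def by (rule degree_map_poly) (metis fr_eq0)
lemma lc_emb: "lead_coeff (emb (T::'a poly poly)) = fr (lead_coeff T)"
  by (simp add: degree_emb coeff_emb)

definition dmulR where "dmulR T = pCons 0 (map_poly \<sigma> T) + map_poly \<delta> T"

lemma coeff_dmulR: "coeff (dmulR T) n = (if n = 0 then 0 else \<sigma> (coeff T (n - 1))) + \<delta> (coeff T n)"
  by (cases n) (simp_all add: dmulR_def coeff_map_poly s_0 d_0)

lemma emb_dmulR: "emb (dmulR T) = dmul \<sigma> \<delta> (emb T)"
  by (rule poly_eqI) (simp add: coeff_emb coeff_dmul coeff_dmulR fmap_fr fder_fr fmap_0 Zero_fract_def[symmetric])

lemma dmulR_degree: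
  assumes T: "T \<noteq> 0"
  shows "dmulR T \<noteq> 0 \<and> degree (dmulR T) = Suc (degree T) \<and> lead_coeff (dmulR T) = \<sigma> (lead_coeff T)"
proof -
  have e: "emb T \<noteq> 0" using T by (simp add: emb_eq0)
  have d: "degree (dmulR T) = Suc (degree T)"
    using dmul_degree[OF e] by (metis degree_emb emb_dmulR)
  have "fr (lead_coeff (dmulR T)) = fr (\<sigma> (lead_coeff T))"
    using dmul_degree[OF e] by (metis lc_emb emb_dmulR fmap_fr)
  then have "lead_coeff (dmulR T) = \<sigma> (lead_coeff T)" by (simp add: fr_inj)
  moreover have "dmulR T \<noteq> 0" using d by auto
  ultimately show ?thesis using d by simp
qed

lemma dmulR_pow:
  assumes T: "T \<noteq> 0"
  shows "(dmulR ^^ j) T \<noteq> 0 \<and> degree ((dmulR ^^ j) T) = degree T + j \<and> lead_coeff ((dmulR ^^ j) T) = (\<sigma> ^^ j) (lead_coeff T)"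
proof (induction j)
  case (Suc j)
  define X where "X = (dmulR ^^ j) T"
  have X: "X \<noteq> 0" "degree X = degree T + j" "lead_coeff X = (\<sigma> ^^ j) (lead_coeff T)"
    using Suc.IH unfolding X_def by auto
  have A: "dmulR X \<noteq> 0" "degree (dmulR X) = Suc (degree X)" "lead_coeff (dmulR X) = \<sigma> (lead_coeff X)"
    using dmulR_degree[OF X(1)] by auto
  have e: "(dmulR ^^ Suc j) T = dmulR X" unfolding X_def by simp
  show ?case unfolding e using A X by simp
qed (simp add: T)

lemma in_cont_add: "in_cont \<sigma> \<delta> L T1 \<Longrightarrow> in_cont \<sigma> \<delta> L T2 \<Longrightarrow> in_cont \<sigma> \<delta> L (T1 + T2)"
  unfolding in_cont_def by (metis ore_mult_add emb_add)

lemma in_cont_smult: "in_cont \<sigma> \<delta> L T \<Longrightarrow> in_cont \<sigma> \<delta> L (smult c T)"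
  unfolding in_cont_def by (metis ore_mult_smult emb_smult)

lemma in_cont_dmulR: "in_cont \<sigma> \<delta> L T \<Longrightarrow> in_cont \<sigma> \<delta> L (dmulR T)"
  unfolding in_cont_def by (metis ore_mult_dmul emb_dmulR)

lemma in_cont_dmulR_pow: "in_cont \<sigma> \<delta> L T \<Longrightarrow> in_cont \<sigma> \<delta> L ((dmulR ^^ j) T)"
  by (induction j) (simp_all add: in_cont_dmulR)

end


lemma irr_prim:
  fixes p :: "'a::idom poly"
  assumes irr: "irreducible p" and dg: "degree p > 0"
  shows "primitive p"
  unfolding primitive_def
proof (intro conjI allI impI)
  show "p \<noteq> 0" using dg by auto
  fix d assume "\<forall>i. d dvd coeff p i"
  then obtain h where h: "p = smult d h" using smult_exists by blast
  then have "p = [:d:] * h" by simp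
  then have "[:d:] dvd 1 \<or> h dvd 1" using irr unfolding irreducible_def by blast
  moreover have "\<not> h dvd 1"
  proof
    assume "h dvd 1"
    then obtain c where "h = [:c:]" using is_unit_poly_iff by blast
    then show False using h dg by simp
  qed
  ultimately show "d dvd 1" using is_unit_const_poly_iff by blast
qed

lemma prim_dvd_const_mult:
  fixes p f :: "'a::idom poly"
  assumes PID: "is_PID_type TYPE('a)" and p: "primitive p" and a: "a \<noteq> 0"
    and dv: "p dvd [:a:] * f"
  shows "p dvd f"
proof -
  obtain g where g: "[:a:] * f = p * g" using dv by (auto simp: dvd_def)
  show ?thesis
  proof (cases "g = 0")
    case True then have "f = 0" using g a by simp
    then show ?thesis by simp
  next
    case False
    obtain c g0 where cg: "g = smult c g0" "primitive g0" using content_decomp[OF PID False] by blast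
    have pg: "primitive (p * g0)" using prim_mult[OF PID p cg(2)] .
    have e: "smult a f = smult c (p * g0)" using g cg by simp
    have "a dvd c * coeff (p * g0) i" for i
      using arg_cong[OF e, of "\<lambda>q. coeff q i"] by (simp add: dvd_def) (metis)
    then have "a dvd c" using prim_dvd_cancel[OF PID pg] by blast
    then obtain c' where c': "c = a * c'" by (auto simp: dvd_def)
    have "smult a f = smult a (smult c' (p * g0))" using e c' by simp
    then have "f = smult c' (p * g0)" by (rule smult_cancel[OF a])
    then have "f = p * smult c' g0" by (simp add: mult_smult_right)
    then show ?thesis by (metis dvd_triv_left)
  qed
qed

lemma rel_prime_const:
  fixes q :: "'a::idom poly"
  assumes q: "primitive q" and a: "a \<noteq> 0"
  shows "rel_prime q [:a:]"
  unfolding rel_prime_def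
proof (intro allI impI)
  fix e assume e1: "e dvd q" and e2: "e dvd [:a:]"
  have "degree e \<le> degree [:a:]" using dvd_imp_degree_le[OF e2] a by simp
  then obtain e0 where e0: "e = [:e0:]" by (metis degree_pCons_0 le_zero_eq degree_eq_zeroE)
  obtain h where "q = e * h" using e1 by (auto simp: dvd_def)
  then have "q = smult e0 h" using e0 by simp
  then have "\<forall>i. e0 dvd coeff q i" by simp
  then have "e0 dvd 1" using q unfolding primitive_def by blast
  then show "e dvd 1" using e0 is_unit_const_poly_iff by blast
qed

lemma prim_assoc:
  fixes H1 H2 :: "'a::idom poly"
  assumes PID: "is_PID_type TYPE('a)" and h1: "primitive H1" and h2: "primitive H2"
    and x: "x \<noteq> 0" and y: "y \<noteq> 0" and e: "smult x H1 = smult y H2"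
  shows "\<exists>u. u dvd 1 \<and> H2 = smult u H1"
proof -
  have c: "x * coeff H1 i = y * coeff H2 i" for i using arg_cong[OF e, of "\<lambda>q. coeff q i"] by simp
  have "y dvd x * coeff H1 i" for i using c by simp
  then have yx: "y dvd x" using prim_dvd_cancel[OF PID h1] by blast
  have "x dvd y * coeff H2 i" for i using c by (metis dvd_triv_left)
  then have xy: "x dvd y" using prim_dvd_cancel[OF PID h2] by blast
  obtain w where w: "x = y * w" using yx by (auto simp: dvd_def)
  obtain w' where w': "y = x * w'" using xy by (auto simp: dvd_def)
  have "y * 1 = y * (w * w')" using w w' by (simp add: ac_simps)
  then have ww: "w * w' = 1" using y by simp
  have "smult y (smult w H1) = smult y H2" using e w by simp
  then have "H2 = smult w H1" using y by (metis smult_cancel)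
  moreover have "w dvd 1" using ww by (metis dvd_triv_left)
  ultimately show ?thesis by blast
qed

context ore_ctx begin

lemma s_prim: "primitive g \<Longrightarrow> primitive (\<sigma> g)"
  unfolding primitive_def
proof (intro conjI allI impI)
  assume g: "g \<noteq> 0 \<and> (\<forall>d. (\<forall>i. d dvd coeff g i) \<longrightarrow> d dvd 1)"
  then show "\<sigma> g \<noteq> 0" by (simp add: s_eq0)
  fix d assume "\<forall>i. d dvd coeff (\<sigma> g) i"
  then obtain h where "\<sigma> g = smult d h" using smult_exists by blast
  then have "g = smult d (si h)" by (metis si_s si_smult)
  then show "d dvd 1" using g by simp
qed

lemma si_prim: "primitive g \<Longrightarrow> primitive (si g)"
  unfolding primitive_def
proof (intro conjI allI impI)
  assume g: "g \<noteq> 0 \<and> (\<forall>d. (\<forall>i. d dvd coeff g i) \<longrightarrow> d dvd 1)"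
  then show "si g \<noteq> 0" by (simp add: si_eq0)
  fix d assume "\<forall>i. d dvd coeff (si g) i"
  then obtain h where "si g = smult d h" using smult_exists by blast
  then have "g = smult d (\<sigma> h)" by (metis s_si s_smult)
  then show "d dvd 1" using g by simp
qed

lemma sp_prim: "primitive g \<Longrightarrow> primitive ((\<sigma> ^^ n) g)"
  by (induction n) (simp_all add: s_prim)
lemma sip_prim: "primitive g \<Longrightarrow> primitive ((si ^^ n) g)"
  by (induction n) (simp_all add: si_prim)

end


locale main_ctx = ore_ctx +
  fixes L :: "'a poly poly" and ps :: "'a poly list"
  assumes PID: "is_PID_type TYPE('a)"
    and ord: "degree L > 0"
    and irr: "\<And>i. i < length ps \<Longrightarrow> degree (ps ! i) > 0 \<and> irreducible (ps ! i)"
begin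

definition DD where "DD ks = (\<Prod>i<length ps. (ps ! i) ^ (ks ! i))"

lemma L_nz: "L \<noteq> 0" using ord by auto

lemma DD_nz: "DD ks \<noteq> 0"
proof -
  have "\<forall>i\<in>{..<length ps}. (ps ! i) ^ (ks ! i) \<noteq> 0"
  proof
    fix i assume "i \<in> {..<length ps}"
    then have "ps ! i \<noteq> 0" using irr[of i] by auto
    then show "(ps ! i) ^ (ks ! i) \<noteq> 0" by simp
  qed
  then show ?thesis unfolding DD_def by (simp add: prod_zero_iff)
qed

lemma spow_nonpos: "spow \<sigma> (- int m) = si ^^ m"
  by (cases "m = 0") (simp_all add: spow_def inv_s)

lemma spow_diff: "r \<le> k \<Longrightarrow> spow \<sigma> (int r - int k) = si ^^ (k - r)"
  using spow_nonpos[of "k - r"] by (simp add: of_nat_diff)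

lemma desing_data:
  assumes "desingularized \<sigma> \<delta> ps L T"
  obtains P a b ks where "ore_mult \<sigma> \<delta> P (emb L) = emb T" "P \<noteq> 0"
    "degree T = degree P + degree L" "T \<noteq> 0" "b \<noteq> 0" "a \<noteq> 0" "length ks = length ps"
    "(si ^^ (degree T - degree L)) (lead_coeff T) * ([:b:] * DD ks) = [:a:] * lead_coeff L"
    "\<And>i d. i < length ps \<Longrightarrow> d > ks ! i \<Longrightarrow> non_removable \<sigma> \<delta> ((ps ! i) ^ d) L"
proof -
  obtain a b ks where T: "T \<noteq> 0" "in_cont \<sigma> \<delta> L T" "b \<noteq> 0" "length ks = length ps"
    and eq: "Fract (spow \<sigma> (int (degree L) - int (degree T)) (lead_coeff T)) 1
          = Fract [:a:] ([:b:] * (\<Prod>i<length ps. (ps ! i) ^ (ks ! i))) * Fract (lead_coeff L) 1"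
    and nr: "\<And>i d. i < length ps \<Longrightarrow> d > ks ! i \<Longrightarrow> non_removable \<sigma> \<delta> ((ps ! i) ^ d) L"
    using assms unfolding desingularized_def by blast
  obtain P where P: "ore_mult \<sigma> \<delta> P (emb L) = emb T" using T(2) unfolding in_cont_def by blast
  have Pnz: "P \<noteq> 0"
  proof
    assume "P = 0"
    then have "emb T = 0" using P by (simp add: ore_mult_0)
    then show False using T(1) by (simp add: emb_eq0)
  qed
  have eL: "emb L \<noteq> 0" using L_nz by (simp add: emb_eq0)
  have dT: "degree T = degree P + degree L"
    using ore_mult_degree[OF Pnz eL] P by (simp add: degree_emb)
  have sp: "spow \<sigma> (int (degree L) - int (degree T)) = si ^^ (degree T - degree L)"
    using dT by (intro spow_diff) simp
  have bD: "[:b:] * DD ks \<noteq> 0" using T(3) DD_nz by simp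
  have e2: "(si ^^ (degree T - degree L)) (lead_coeff T) * ([:b:] * DD ks) = [:a:] * lead_coeff L"
    using eq bD unfolding sp DD_def[symmetric] by (simp add: eq_fract)
  have "(si ^^ (degree T - degree L)) (lead_coeff T) \<noteq> 0" using T(1) by (simp add: sip_eq0)
  then have "[:a:] * lead_coeff L \<noteq> 0" using e2 bD by (metis mult_eq_0_iff)
  then have "a \<noteq> 0" by auto
  show ?thesis by (rule that[OF P Pnz dT T(1) T(3) \<open>a \<noteq> 0\<close> T(4) e2 nr])
qed

lemma ks_le:
  assumes P1: "ore_mult \<sigma> \<delta> P1 (emb L) = emb T1" "P1 \<noteq> 0" "degree T1 = degree P1 + degree L"
    and ab: "b1 \<noteq> 0" "a1 \<noteq> 0" "length ks1 = length ps"
    and E: "(si ^^ (degree T1 - degree L)) (lead_coeff T1) * ([:b1:] * DD ks1) = [:a1:] * lead_coeff L"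
    and N2: "\<And>d. d > ks2 ! i \<Longrightarrow> non_removable \<sigma> \<delta> ((ps ! i) ^ d) L"
    and i: "i < length ps"
  shows "ks1 ! i \<le> ks2 ! i"
proof (rule ccontr)
  assume "\<not> ks1 ! i \<le> ks2 ! i"
  then have gt: "ks1 ! i > ks2 ! i" by simp
  define n where "n = ks1 ! i"
  define p where "p = ps ! i"
  define V where "V = (\<Prod>j\<in>{..<length ps} - {i}. (ps ! j) ^ (ks1 ! j))"
  have DDs: "DD ks1 = p ^ n * V"
    unfolding DD_def V_def p_def n_def using i by (subst prod.remove[of _ i]) auto
  have pp: "primitive (p ^ n)" using prim_power[OF PID irr_prim] irr[OF i] unfolding p_def by blast
  define X where "X = (si ^^ (degree T1 - degree L)) (lead_coeff T1)"
  have E': "[:a1:] * lead_coeff L = p ^ n * (X * [:b1:] * V)" using E unfolding X_def DDs by (simp add: ac_simps)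
  have dvdL: "p ^ n dvd lead_coeff L"
    using prim_dvd_const_mult[OF PID pp ab(2)] E' by (metis dvd_triv_left)
  have rp: "rel_prime (p ^ n) [:a1:]" using rel_prime_const[OF pp ab(2)] .
  have vnz: "[:b1:] * V \<noteq> 0" using DD_nz[of ks1] ab(1) DDs by auto
  have dP: "degree T1 - degree L = degree P1" using P1(3) by simp
  have feq: "Fract (spow \<sigma> (- int (degree P1)) (lead_coeff T1)) 1 = Fract [:a1:] ([:b1:] * V * p ^ n) * Fract (lead_coeff L) 1"
  proof -
    have "p ^ n \<noteq> 0" using pp unfolding primitive_def by blast
    then have nz: "[:b1:] * V * p ^ n \<noteq> 0" using vnz by simp
    have "X * ([:b1:] * V * p ^ n) = [:a1:] * lead_coeff L" using E' by (simp add: ac_simps)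
    then show ?thesis using nz unfolding spow_nonpos X_def dP[symmetric] by (simp add: eq_fract)
  qed
  have "removable_at \<sigma> \<delta> (p ^ n) L (degree P1)"
    unfolding removable_at_def
    using dvdL P1(2) P1(1) rp vnz feq by blast
  moreover have "non_removable \<sigma> \<delta> (p ^ n) L" using N2 gt unfolding n_def p_def by blast
  ultimately show False unfolding non_removable_def by blast
qed

end


context main_ctx begin

lemma combine:
  assumes D1: "desingularized \<sigma> \<delta> ps L T1" and g1: "primitive g1" and l1: "lead_coeff T1 = smult c1 g1"
    and D2: "desingularized \<sigma> \<delta> ps L T2" and g2: "primitive g2" and l2: "lead_coeff T2 = smult c2 g2"
  shows "\<alpha> * c1 + \<beta> * c2 \<in> desing_content_set \<sigma> \<delta> ps L"
proof -
  obtain P1 a1 b1 ks1 where A1: "ore_mult \<sigma> \<delta> P1 (emb L) = emb T1" "P1 \<noteq> 0"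
    "degree T1 = degree P1 + degree L" "T1 \<noteq> 0" "b1 \<noteq> 0" "a1 \<noteq> 0" "length ks1 = length ps"
    and E1: "(si ^^ (degree T1 - degree L)) (lead_coeff T1) * ([:b1:] * DD ks1) = [:a1:] * lead_coeff L"
    and N1: "\<And>i d. i < length ps \<Longrightarrow> d > ks1 ! i \<Longrightarrow> non_removable \<sigma> \<delta> ((ps ! i) ^ d) L"
    using desing_data[OF D1] by metis
  obtain P2 a2 b2 ks2 where A2: "ore_mult \<sigma> \<delta> P2 (emb L) = emb T2" "P2 \<noteq> 0"
    "degree T2 = degree P2 + degree L" "T2 \<noteq> 0" "b2 \<noteq> 0" "a2 \<noteq> 0" "length ks2 = length ps"
    and E2: "(si ^^ (degree T2 - degree L)) (lead_coeff T2) * ([:b2:] * DD ks2) = [:a2:] * lead_coeff L"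
    and N2: "\<And>i d. i < length ps \<Longrightarrow> d > ks2 ! i \<Longrightarrow> non_removable \<sigma> \<delta> ((ps ! i) ^ d) L"
    using desing_data[OF D2] by metis
  have ks: "ks1 = ks2"
  proof (rule nth_equalityI)
    show "length ks1 = length ks2" using A1(7) A2(7) by simp
    fix i assume "i < length ks1"
    then have i: "i < length ps" using A1(7) by simp
    have "ks1 ! i \<le> ks2 ! i"
      by (rule ks_le[OF A1(1,2,3,5,6,7) E1 N2[OF i] i])
    moreover have "ks2 ! i \<le> ks1 ! i"
      by (rule ks_le[OF A2(1,2,3,5,6,7) E2 N1[OF i] i])
    ultimately show "ks1 ! i = ks2 ! i" by simp
  qed
  define r where "r = degree L"
  define k1 where "k1 = degree T1"
  define k2 where "k2 = degree T2"
  define D where "D = DD ks1"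
  have Dnz: "D \<noteq> 0" unfolding D_def by (rule DD_nz)
  define H1 where "H1 = (si ^^ (k1 - r)) g1"
  define H2 where "H2 = (si ^^ (k2 - r)) g2"
  have H1p: "primitive H1" unfolding H1_def by (rule sip_prim[OF g1])
  have H2p: "primitive H2" unfolding H2_def by (rule sip_prim[OF g2])
  have c1: "c1 \<noteq> 0" using A1(4) l1 by auto
  have c2: "c2 \<noteq> 0" using A2(4) l2 by auto
  have E1': "smult (c1 * b1) (H1 * D) = smult a1 (lead_coeff L)"
    using E1 unfolding l1 sip_smult H1_def[symmetric, unfolded k1_def r_def] D_def[symmetric]
    by (simp add: ac_simps mult_smult_left mult_smult_right)
  have E2': "smult (c2 * b2) (H2 * D) = smult a2 (lead_coeff L)"
    using E2 unfolding l2 sip_smult H2_def[symmetric, unfolded k2_def r_def] ks[symmetric] D_def[symmetric]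
    by (simp add: ac_simps mult_smult_left mult_smult_right)
  have "smult a2 (smult (c1 * b1) (H1 * D)) = smult a1 (smult (c2 * b2) (H2 * D))"
    unfolding E1' E2' by (simp add: ac_simps)
  then have "smult (a2 * (c1 * b1)) H1 * D = smult (a1 * (c2 * b2)) H2 * D"
    by (simp add: mult_smult_left)
  then have "smult (a2 * (c1 * b1)) H1 = smult (a1 * (c2 * b2)) H2" using Dnz by (metis mult_smult_left mult_cancel_right)
  then obtain u where u: "u dvd 1" "H2 = smult u H1"
    using prim_assoc[OF PID H1p H2p] c1 c2 A1(5,6) A2(5,6) by (metis mult_eq_0_iff)
  obtain v where uv: "u * v = 1" using u(1) by (auto simp: dvd_def)
  define k where "k = max k1 k2"
  have rk1: "r \<le> k1" using A1(3) unfolding r_def k1_def by simp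
  have rk2: "r \<le> k2" using A2(3) unfolding r_def k2_def by simp
  define T1' where "T1' = (dmulR ^^ (k - k1)) T1"
  define T2' where "T2' = (dmulR ^^ (k - k2)) T2"
  define G where "G = (\<sigma> ^^ (k - r)) H1"
  have Gp: "primitive G" unfolding G_def by (rule sp_prim[OF H1p])
  have g1H: "g1 = (\<sigma> ^^ (k1 - r)) H1" unfolding H1_def by (simp add: sp_sip)
  have g2H: "g2 = (\<sigma> ^^ (k2 - r)) H2" unfolding H2_def by (simp add: sp_sip)
  have dT1': "degree T1' = k" and lT1': "lead_coeff T1' = smult c1 G"
  proof -
    have h: "degree T1' = k1 + (k - k1)" "lead_coeff T1' = (\<sigma> ^^ (k - k1)) (lead_coeff T1)"
      using dmulR_pow[OF A1(4), of "k - k1"] unfolding T1'_def k1_def by auto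
    show "degree T1' = k" using h(1) unfolding k_def by simp
    have "(\<sigma> ^^ (k - k1)) ((\<sigma> ^^ (k1 - r)) H1) = (\<sigma> ^^ (k - r)) H1"
    proof -
      have e: "k - r = (k - k1) + (k1 - r)" using rk1 by (simp add: k_def)
      show ?thesis by (simp only: e funpow_add comp_apply)
    qed
    then show "lead_coeff T1' = smult c1 G" unfolding h(2) l1 sp_smult g1H G_def by simp
  qed
  have dT2': "degree T2' = k" and lT2': "lead_coeff T2' = smult (c2 * u) G"
  proof -
    have h: "degree T2' = k2 + (k - k2)" "lead_coeff T2' = (\<sigma> ^^ (k - k2)) (lead_coeff T2)"
      using dmulR_pow[OF A2(4), of "k - k2"] unfolding T2'_def k2_def by auto
    show "degree T2' = k" using h(1) unfolding k_def by simp
    have "(\<sigma> ^^ (k - k2)) ((\<sigma> ^^ (k2 - r)) H2) = (\<sigma> ^^ (k - r)) H2"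
    proof -
      have e: "k - r = (k - k2) + (k2 - r)" using rk2 by (simp add: k_def)
      show ?thesis by (simp only: e funpow_add comp_apply)
    qed
    then show "lead_coeff T2' = smult (c2 * u) G" unfolding h(2) l2 sp_smult g2H G_def u(2) by simp
  qed
  define s where "s = \<alpha> * c1 + \<beta> * c2"
  show ?thesis
  proof (cases "s = 0")
    case True then show ?thesis unfolding s_def desing_content_set_def by simp
  next
    case False
    define T where "T = smult [:\<alpha>:] T1' + smult [:\<beta> * v:] T2'"
    have ck: "coeff T k = smult s G"
      unfolding T_def using dT1' dT2' lT1' lT2'
      by (simp add: s_def smult_add_left) (metis (no_types, lifting) mult.left_commute mult_1_right uv mult.commute)
    have Gnz: "G \<noteq> 0" using Gp unfolding primitive_def by blast
    have ckn: "coeff T k \<noteq> 0" using ck False Gnz by simp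
    have "degree T \<le> k" unfolding T_def
      by (rule degree_add_le) (use dT1' dT2' degree_smult_le in \<open>metis\<close>)+
    moreover have "k \<le> degree T" using ckn by (rule le_degree)
    ultimately have dT: "degree T = k" by simp
    then have lT: "lead_coeff T = smult s G" using ck by simp
    have Tnz: "T \<noteq> 0" using ckn by auto
    have ic: "in_cont \<sigma> \<delta> L T"
    proof -
      have "in_cont \<sigma> \<delta> L T1" "in_cont \<sigma> \<delta> L T2" using D1 D2 unfolding desingularized_def by auto
      then show ?thesis unfolding T_def T1'_def T2'_def
        by (intro in_cont_add in_cont_smult in_cont_dmulR_pow)
    qed
    have rk: "r \<le> k" using rk1 unfolding k_def by simp
    have sp: "spow \<sigma> (int (degree L) - int (degree T)) = si ^^ (k - r)"
      unfolding dT r_def by (rule spow_diff) (use rk r_def in simp)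
    have siG: "(si ^^ (k - r)) (lead_coeff T) = smult s H1"
      unfolding lT sip_smult G_def sip_sp ..
    have bD: "[:c1 * b1:] * DD ks1 \<noteq> 0" using c1 A1(5) DD_nz by simp
    have key: "smult s H1 * ([:c1 * b1:] * DD ks1) = [:s * a1:] * lead_coeff L"
    proof -
      have "smult s H1 * ([:c1 * b1:] * DD ks1) = smult s (smult (c1 * b1) (H1 * D))"
        unfolding D_def by (simp add: mult_smult_left mult_smult_right ac_simps)
      also have "\<dots> = [:s * a1:] * lead_coeff L" unfolding E1' by simp
      finally show ?thesis .
    qed
    have feq: "Fract (spow \<sigma> (int (degree L) - int (degree T)) (lead_coeff T)) 1
          = Fract [:s * a1:] ([:c1 * b1:] * (\<Prod>i<length ps. (ps ! i) ^ (ks1 ! i))) * Fract (lead_coeff L) 1"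
      using key bD unfolding sp siG DD_def by (simp add: eq_fract)
    have "desingularized \<sigma> \<delta> ps L T"
      unfolding desingularized_def
    proof (intro conjI exI)
      show "T \<noteq> 0" by (rule Tnz)
      show "in_cont \<sigma> \<delta> L T" by (rule ic)
      show "c1 * b1 \<noteq> 0" using c1 A1(5) by simp
      show "length ks1 = length ps" by (rule A1(7))
      show "Fract (spow \<sigma> (int (degree L) - int (degree T)) (lead_coeff T)) 1
          = Fract [:s * a1:] ([:c1 * b1:] * (\<Prod>i<length ps. (ps ! i) ^ (ks1 ! i))) * Fract (lead_coeff L) 1"
        by (rule feq)
      show "\<forall>i<length ps. \<forall>d. ks1 ! i < d \<longrightarrow> non_removable \<sigma> \<delta> ((ps ! i) ^ d) L"
        using N1 by blast
    qed
    then show ?thesis unfolding desing_content_set_def s_def[symmetric] using Gp lT by blast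
  qed
qed

lemma ideal: "is_ideal (desing_content_set \<sigma> \<delta> ps L)"
  unfolding is_ideal_def
proof (intro conjI ballI allI)
  show "0 \<in> desing_content_set \<sigma> \<delta> ps L" unfolding desing_content_set_def by simp
next
  fix a b assume a: "a \<in> desing_content_set \<sigma> \<delta> ps L" and b: "b \<in> desing_content_set \<sigma> \<delta> ps L"
  show "a + b \<in> desing_content_set \<sigma> \<delta> ps L"
  proof (cases "a = 0 \<or> b = 0")
    case True then show ?thesis using a b by auto
  next
    case False
    then obtain T1 g1 T2 g2 where "desingularized \<sigma> \<delta> ps L T1" "primitive g1" "lead_coeff T1 = smult a g1"
      "desingularized \<sigma> \<delta> ps L T2" "primitive g2" "lead_coeff T2 = smult b g2"
      using a b unfolding desing_content_set_def by auto
    from combine[OF this, of 1 1] show ?thesis by simp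
  qed
next
  fix a r assume a: "a \<in> desing_content_set \<sigma> \<delta> ps L"
  show "r * a \<in> desing_content_set \<sigma> \<delta> ps L"
  proof (cases "a = 0")
    case True then show ?thesis unfolding desing_content_set_def by simp
  next
    case False
    then obtain T1 g1 where "desingularized \<sigma> \<delta> ps L T1" "primitive g1" "lead_coeff T1 = smult a g1"
      using a unfolding desing_content_set_def by auto
    from combine[OF this this, of r 0] show ?thesis by simp
  qed
qed

end


theorem mainTheorem14:
  fixes \<gamma> \<tau> c :: "'a::idom"
    and \<sigma> \<delta> :: "'a poly \<Rightarrow> 'a poly"
    and L :: "'a poly poly"
    and ps :: "'a poly list" and es :: "nat list"
  assumes PID: "is_PID_type TYPE('a)"
    and unit: "\<gamma> dvd 1"
    and sigma: "\<And>p. \<sigma> p = pcompose p [:\<tau>, \<gamma>:]"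
    and d_add: "\<And>p q. \<delta> (p + q) = \<delta> p + \<delta> q"
    and d_lin: "\<And>a p. \<delta> (smult a p) = smult a (\<delta> p)"
    and d_mult: "\<And>p q. \<delta> (p * q) = \<sigma> p * \<delta> q + \<delta> p * q"
    and d_x: "degree (\<delta> [:0, 1:]) \<le> 1"
    and ord: "degree L > 0"
    and len: "length es = length ps"
    and fac: "lead_coeff L = smult c (\<Prod>i<length ps. (ps ! i) ^ (es ! i))"
    and irr: "\<And>i. i < length ps \<Longrightarrow> degree (ps ! i) > 0 \<and> irreducible (ps ! i)"
    and cop: "\<And>i j. i < length ps \<Longrightarrow> j < length ps \<Longrightarrow> i \<noteq> j \<Longrightarrow> rel_prime (ps ! i) (ps ! j)"
  shows "is_ideal (desing_content_set \<sigma> \<delta> ps L)"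
proof -
  interpret M: main_ctx \<gamma> \<tau> \<sigma> \<delta> L ps
    by (unfold_locales; (rule unit sigma d_add d_mult PID ord irr)?; (rule irr)?; assumption?)
  show ?thesis by (rule M.ideal)
qed

end
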